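(* Let $k$ be a positive integer, let $L=\{\ell_1,\ldots,\ell_s\}\subset[0,k-1]$ with $\ell_1<\cdots<\ell_s$, and let $L^C=[0,k-1]\setminus L=\{\ell'_1,\ldots,\ell'_{k-s}\}$ with $\ell'_1<\cdots<\ell'_{k-s}$. Suppose $L$ contains $b$ full runs of consecutive integers with lengths $m_i$ ($1\le i\le b$) and $L^C$ contains $b'$ full runs of consecutive integers with lengths $m'_j$ ($1\le j\le b'$). Then \[\prod_{i=1}^{b}m_i!\cdot\frac{\binom{k}{k-\ell_1}\binom{k-\ell_1-1}{k-\ell_2}\cdots\binom{k-\ell_{s-1}-1}{k-\ell_s}}{\prod_{i=1}^s(\ell_i+1)(k-\ell_i)}\cdot\prod_{j=1}^{b'}m'_j!\cdot\frac{\binom{k}{k-\ell'_1}\binom{k-\ell'_1-1}{k-\ell'_2}\cdots\binom{k-\ell'_{k-s-1}-1}{k-\ell'_{k-s}}}{\prod_{i=1}^{k-s}(\ell'_i+1)(k-\ell'_i)}=\frac{1}{k!}.\]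
   Context: $[a,b]=\{a,\ldots,b\}$. For a finite set of integers $\{x_1<\cdots<x_t\}$, a subset $\{x_m,\ldots,x_{m+p}\}$ is a run if $x_{m+i}=x_m+i$ for $0\le i\le p$; it is a full run if moreover ($m=1$ or $x_{m-1}<x_m-1$) and ($m+p=t$ or $x_{m+p+1}>x_{m+p}+1$). The set decomposes uniquely into full runs; the length of a run is its cardinality. *)

theory Defs
  imports Complex_Main
begin

text \<open>The condition (a = 0 or a - 1 not in S) expresses that the preceding element of the set
  (if any) is smaller than a - 1; likewise Suc b not in S for the following element.\<close>
definition full_runs :: "nat set \<Rightarrow> nat set set" where
  "full_runs S = {{a..b} | a b. a \<le> b \<and> {a..b} \<subseteq> S \<and> (a = 0 \<or> a - 1 \<notin> S) \<and> Suc b \<notin> S}"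

fun chain_binom_aux :: "nat \<Rightarrow> nat \<Rightarrow> nat list \<Rightarrow> nat" where
  "chain_binom_aux k p [] = 1"
| "chain_binom_aux k p (y # ys) = ((k - p - 1) choose (k - y)) * chain_binom_aux k y ys"

fun chain_binom :: "nat \<Rightarrow> nat list \<Rightarrow> nat" where
  "chain_binom k [] = 1"
| "chain_binom k (x # xs) = (k choose (k - x)) * chain_binom_aux k x xs"

end

theory Submission
  imports Defs
begin

fun fch :: "nat \<Rightarrow> nat \<Rightarrow> nat list \<Rightarrow> nat" where
  "fch k q [] = 1"
| "fch k q (y # ys) = ((k - q) choose (k - y)) * fch k (Suc y) ys"

lemma aux_fch: "chain_binom_aux k p ys = fch k (Suc p) ys"
  by (induction ys arbitrary: p) auto

lemma chain_fch: "chain_binom k ys = fch k 0 ys"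
  by (cases ys) (auto simp: aux_fch)

lemma full_runs_finite: "finite S \<Longrightarrow> finite (full_runs S)"
  by (rule finite_subset[of _ "Pow S"]) (auto simp: full_runs_def)

lemma full_runs_sub: "R \<in> full_runs S \<Longrightarrow> R \<subseteq> S \<and> R \<noteq> {}"
  by (auto simp: full_runs_def)

lemma full_runs_union:
  assumes A: "\<forall>x\<in>A. x < g" and B: "\<forall>x\<in>B. g < x"
  shows "full_runs (A \<union> B) = full_runs A \<union> full_runs B"
proof (intro equalityI subsetI)
  fix R assume "R \<in> full_runs (A \<union> B)"
  then obtain a b where R: "R = {a..b}" "a \<le> b" "{a..b} \<subseteq> A \<union> B"
    "a = 0 \<or> a - 1 \<notin> A \<union> B" "Suc b \<notin> A \<union> B" by (auto simp: full_runs_def)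
  have "g \<notin> A \<union> B" using A B by auto
  hence "g \<notin> {a..b}" using R by blast
  hence "b < g \<or> g < a" by auto
  thus "R \<in> full_runs A \<union> full_runs B"
  proof
    assume "b < g"
    hence "{a..b} \<subseteq> A" using R B by fastforce
    moreover have "a = 0 \<or> a - 1 \<notin> A" using R by auto
    moreover have "Suc b \<notin> A" using R by auto
    ultimately show ?thesis using R unfolding full_runs_def by blast
  next
    assume "g < a"
    hence "{a..b} \<subseteq> B" using R A by fastforce
    moreover have "a = 0 \<or> a - 1 \<notin> B" using R by auto
    moreover have "Suc b \<notin> B" using R by auto
    ultimately show ?thesis using R unfolding full_runs_def by blast
  qed
next
  fix R assume "R \<in> full_runs A \<union> full_runs B"
  thus "R \<in> full_runs (A \<union> B)"
  proof
    assume "R \<in> full_runs A"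
    then obtain a b where R: "R = {a..b}" "a \<le> b" "{a..b} \<subseteq> A"
      "a = 0 \<or> a - 1 \<notin> A" "Suc b \<notin> A" by (auto simp: full_runs_def)
    have "b < g" using R A by auto
    hence "a = 0 \<or> a - 1 \<notin> A \<union> B" "Suc b \<notin> A \<union> B" using R B by fastforce+
    thus ?thesis using R unfolding full_runs_def by blast
  next
    assume "R \<in> full_runs B"
    then obtain a b where R: "R = {a..b}" "a \<le> b" "{a..b} \<subseteq> B"
      "a = 0 \<or> a - 1 \<notin> B" "Suc b \<notin> B" by (auto simp: full_runs_def)
    have "g < a" using R B by auto
    hence "a = 0 \<or> a - 1 \<notin> A \<union> B" "Suc b \<notin> A \<union> B" using R A by fastforce+
    thus ?thesis using R unfolding full_runs_def by blast
  qed
qed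

lemma full_runs_interval:
  "(\<Prod>R\<in>full_runs {a..<b}. fact (card R)) = (fact (b - a) :: nat)"
proof (cases "a < b")
  case True
  have "full_runs {a..<b} = {{a..b-1}}"
  proof (intro equalityI subsetI)
    fix R assume "R \<in> full_runs {a..<b}"
    then obtain c d where R: "R = {c..d}" "c \<le> d" "{c..d} \<subseteq> {a..<b}"
      "c = 0 \<or> c - 1 \<notin> {a..<b}" "Suc d \<notin> {a..<b}" by (auto simp: full_runs_def)
    have "c = a" using R by (auto simp: subset_iff)
    moreover have "d = b - 1" using R by (auto simp: subset_iff)
    ultimately show "R \<in> {{a..b-1}}" using R by simp
  next
    fix R assume "R \<in> {{a..b-1}}"
    thus "R \<in> full_runs {a..<b}" using True unfolding full_runs_def
      by (intro CollectI exI[of _ a] exI[of _ "b-1"]) auto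
  qed
  thus ?thesis using True by simp
next
  case False
  hence "full_runs {a..<b} = {}" by (auto simp: full_runs_def)
  thus ?thesis using False by simp
qed

lemma main_lemma:
  "sorted_wrt (<) ys \<Longrightarrow> \<forall>y\<in>set ys. q \<le> y \<and> y < k \<Longrightarrow>
   fch k q ys * (\<Prod>y\<in>set ys. k - y) * (\<Prod>R\<in>full_runs ({q..<k} - set ys). fact (card R)) = fact (k - q)"
proof (induction ys arbitrary: q)
  case Nil
  then show ?case by (simp add: full_runs_interval)
next
  case (Cons y ys)
  have y: "q \<le> y" "y < k" using Cons.prems by auto
  have yn: "y \<notin> set ys" using Cons.prems by auto
  have IH: "fch k (Suc y) ys * (\<Prod>y\<in>set ys. k - y) * (\<Prod>R\<in>full_runs ({Suc y..<k} - set ys). fact (card R)) = fact (k - Suc y)"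
    using Cons.prems by (intro Cons.IH) auto
  have split: "{q..<k} - set (y # ys) = {q..<y} \<union> ({Suc y..<k} - set ys)"
    using Cons.prems by auto
  have fr: "full_runs ({q..<k} - set (y # ys)) = full_runs {q..<y} \<union> full_runs ({Suc y..<k} - set ys)"
    unfolding split by (rule full_runs_union[where g = y]) auto
  have disj: "full_runs {q..<y} \<inter> full_runs ({Suc y..<k} - set ys) = {}"
  proof -
    have "R \<notin> full_runs ({Suc y..<k} - set ys)" if "R \<in> full_runs {q..<y}" for R
    proof
      assume "R \<in> full_runs ({Suc y..<k} - set ys)"
      hence "R \<subseteq> {Suc y..<k}" using full_runs_sub by blast
      moreover have "R \<subseteq> {q..<y}" "R \<noteq> {}" using full_runs_sub[OF that] by auto
      ultimately show False by fastforce
    qed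
    thus ?thesis by blast
  qed
  have P: "(\<Prod>R\<in>full_runs ({q..<k} - set (y # ys)). fact (card R)) =
     (fact (y - q) :: nat) * (\<Prod>R\<in>full_runs ({Suc y..<k} - set ys). fact (card R))"
    unfolding fr prod.union_disjoint[OF full_runs_finite full_runs_finite disj, OF finite_atLeastLessThan finite_Diff[OF finite_atLeastLessThan]] by (subst full_runs_interval[of q y]) (rule refl)
  have F: "(k - y) * fact (k - Suc y) = (fact (k - y) :: nat)"
  proof -
    have e: "k - y = Suc (k - Suc y)" using y by simp
    show ?thesis unfolding e fact_Suc by simp
  qed
  have le: "k - y \<le> k - q" using y by simp
  have e2: "k - q - (k - y) = y - q" using y by simp
  have B: "fact (k - y) * fact (y - q) * ((k - q) choose (k - y)) = (fact (k - q) :: nat)"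
    using binomial_fact_lemma[OF le] unfolding e2 .
  have S: "(\<Prod>y\<in>set (y#ys). k - y) = (k - y) * (\<Prod>y\<in>set ys. k - y)" using yn by simp
  have "fch k q (y # ys) * (\<Prod>y\<in>set (y#ys). k - y) * (\<Prod>R\<in>full_runs ({q..<k} - set (y # ys)). fact (card R))
     = ((k - q) choose (k - y)) * fact (y - q) * (k - y) * (fch k (Suc y) ys * (\<Prod>y\<in>set ys. k - y) * (\<Prod>R\<in>full_runs ({Suc y..<k} - set ys). fact (card R)))"
    unfolding S P fch.simps by (simp only: mult_ac)
  also have "\<dots> = ((k - q) choose (k - y)) * fact (y - q) * ((k - y) * fact (k - Suc y))"
    unfolding IH by (simp only: mult.assoc)
  also have "\<dots> = fact (k - y) * fact (y - q) * ((k - q) choose (k - y))" unfolding F by (simp only: mult_ac)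
  also have "\<dots> = fact (k - q)" using B .
  finally show ?case .
qed

theorem claim1:
  fixes k :: nat and L :: "nat set"
  assumes "k > 0" and "L \<subseteq> {0..k-1}"
  defines "Lc \<equiv> {0..k-1} - L"
  shows "real (\<Prod>R\<in>full_runs L. fact (card R))
           * real (chain_binom k (sorted_list_of_set L))
           / real (\<Prod>l\<in>L. (l + 1) * (k - l))
         * real (\<Prod>R\<in>full_runs Lc. fact (card R))
           * real (chain_binom k (sorted_list_of_set Lc))
           / real (\<Prod>l\<in>Lc. (l + 1) * (k - l))
         = 1 / fact k"
proof -
  have K: "{0..k-1} = {0..<k}" using assms(1) by auto
  have L: "L \<subseteq> {0..<k}" using assms(2) K by simp
  have Lc: "Lc = {0..<k} - L" unfolding Lc_def K ..
  have fL: "finite L" using L finite_subset by blast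
  have fLc: "finite Lc" unfolding Lc by simp
  define a where "a = (\<Prod>R\<in>full_runs L. fact (card R) :: nat)"
  define b where "b = (\<Prod>R\<in>full_runs Lc. fact (card R) :: nat)"
  define c1 where "c1 = chain_binom k (sorted_list_of_set L)"
  define c2 where "c2 = chain_binom k (sorted_list_of_set Lc)"
  define P1 where "P1 = (\<Prod>l\<in>L. k - l)"
  define P2 where "P2 = (\<Prod>l\<in>Lc. k - l)"
  define Q1 where "Q1 = (\<Prod>l\<in>L. l + 1)"
  define Q2 where "Q2 = (\<Prod>l\<in>Lc. l + 1)"
  have Lk: "\<forall>y\<in>L. y < k" using L by auto
  have e1: "c1 * P1 * b = fact k"
    using Lk main_lemma[of "sorted_list_of_set L" 0 k] L fL
    unfolding c1_def P1_def b_def chain_fch Lc by auto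
  have LL: "{0..<k} - Lc = L" using L Lc by auto
  have e2: "c2 * P2 * a = fact k"
    using main_lemma[of "sorted_list_of_set Lc" 0 k] fLc LL
    unfolding c2_def P2_def a_def chain_fch by (auto simp: Lc)
  have un: "L \<union> Lc = {0..<k}" "L \<inter> Lc = {}" using L Lc by auto
  have e3: "P1 * P2 = fact k"
  proof -
    have "P1 * P2 = (\<Prod>l\<in>{0..<k}. k - l)" unfolding P1_def P2_def
      using prod.union_disjoint[OF fL fLc un(2), of "\<lambda>l. k - l"] un(1) by simp
    thus ?thesis by (simp add: fact_prod_rev)
  qed
  have e4: "Q1 * Q2 = fact k"
  proof -
    have "Q1 * Q2 = (\<Prod>l\<in>{0..<k}. l + 1)" unfolding Q1_def Q2_def
      using prod.union_disjoint[OF fL fLc un(2), of "\<lambda>l. l + 1"] un(1) by simp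
    thus ?thesis by (simp add: fact_prod_Suc)
  qed
  have pq1: "(\<Prod>l\<in>L. (l + 1) * (k - l)) = Q1 * P1" unfolding Q1_def P1_def by (simp only: prod.distrib)
  have pq2: "(\<Prod>l\<in>Lc. (l + 1) * (k - l)) = Q2 * P2" unfolding Q2_def P2_def by (simp only: prod.distrib)
  have "real (c1 * P1 * b) * real (c2 * P2 * a) = real (fact k) * real (fact k)" using e1 e2 by simp
  hence E: "real a * real b * real c1 * real c2 * (real P1 * real P2) = real (fact k) * real (fact k)"
    by (simp add: ac_simps)
  have E3: "real P1 * real P2 = real (fact k)" using e3 by (metis of_nat_mult)
  have E4: "real Q1 * real Q2 = real (fact k)" using e4 by (metis of_nat_mult)
  have fk: "real (fact k) > 0" by simp
  have abc: "real a * real b * real c1 * real c2 = real (fact k)"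
    using E E3 fk by (metis mult_right_cancel less_irrefl)
  have "real a * real c1 / real (Q1 * P1) * real b * real c2 / real (Q2 * P2)
      = (real a * real b * real c1 * real c2) / ((real Q1 * real Q2) * (real P1 * real P2))"
    by (simp add: ac_simps)
  also have "\<dots> = 1 / fact k" unfolding abc E3 E4 using fk by (simp add: divide_simps)
  finally show ?thesis unfolding a_def[symmetric] b_def[symmetric] c1_def[symmetric] c2_def[symmetric] pq1 pq2 by simp
qed

end
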